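(* Let $n\geq 2$ be an integer and let $A\subseteq\mathbb{T}$ be an $m$-measurable set with $m(A)=1$. Then $\bigcup_{\lambda\in A}\ker(W_n^{*}-\lambda I)$ spans a dense subspace of $H^2$.
   Context: $\mathbb{T}$ is the unit circle in $\mathbb{C}$ and $m$ is the normalized Lebesgue measure on $\mathbb{T}$. $H^2$ denotes the Hardy space of analytic functions $f(z)=\sum_{k\ge0}\hat f(k)z^k$ on the open unit disk with $\sum_{k}|\hat f(k)|^2<\infty$. For $n\in\mathbb{N}$, $W_n$ is the bounded operator on $H^2$ given by $W_nf(z)=(1+z+\cdots+z^{n-1})f(z^n)$, and $W_n^{*}$ is its adjoint. *)

theory Defs
  imports "HOL-Analysis.Analysis"
begin

text \<open>H^2 is modelled by the sequences of Taylor coefficients (f k = hat f(k)).\<close>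
definition H2 :: "(nat \<Rightarrow> complex) set" where
  "H2 = {f. summable (\<lambda>k. (cmod (f k))\<^sup>2)}"

definition h2_inner :: "(nat \<Rightarrow> complex) \<Rightarrow> (nat \<Rightarrow> complex) \<Rightarrow> complex" where
  "h2_inner f g = (\<Sum>k. f k * cnj (g k))"

definition h2_norm :: "(nat \<Rightarrow> complex) \<Rightarrow> real" where
  "h2_norm f = sqrt (\<Sum>k. (cmod (f k))\<^sup>2)"

text \<open>W_n f(z) = (1+z+...+z^(n-1)) f(z^n): on coefficients, (W_n f)^(k) = hat f(k div n).\<close>
definition W :: "nat \<Rightarrow> (nat \<Rightarrow> complex) \<Rightarrow> (nat \<Rightarrow> complex)" where
  "W n f = (\<lambda>k. f (k div n))"

definition W_adj :: "nat \<Rightarrow> (nat \<Rightarrow> complex) \<Rightarrow> (nat \<Rightarrow> complex)" where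
  "W_adj n g = (THE h. h \<in> H2 \<and> (\<forall>f\<in>H2. h2_inner (W n f) g = h2_inner f h))"

definition eigsp :: "nat \<Rightarrow> complex \<Rightarrow> (nat \<Rightarrow> complex) set" where
  "eigsp n lam = {g \<in> H2. (\<forall>k. W_adj n g k - lam * g k = 0)}"

text \<open>Normalized Lebesgue measure m on the unit circle, via t \<mapsto> exp(2 pi i t), t \<in> [0,1).\<close>
definition circle_param :: "complex set \<Rightarrow> real set" where
  "circle_param A = {t \<in> {0..<1}. cis (2 * pi * t) \<in> A}"

definition circle_measurable :: "complex set \<Rightarrow> bool" where
  "circle_measurable A \<longleftrightarrow> circle_param A \<in> sets lebesgue"

definition circle_measure :: "complex set \<Rightarrow> real" where
  "circle_measure A = measure lebesgue (circle_param A)"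

end

theory Submission
  imports Defs
begin

lemma h2_bound:
  assumes "\<And>N. (\<Sum>k<N. (cmod (x k))\<^sup>2) \<le> K\<^sup>2" "0 \<le> K"
  shows "x \<in> H2" "h2_norm x \<le> K"
proof -
  have s: "summable (\<lambda>k. (cmod (x k))\<^sup>2)"
    by (rule summableI_nonneg_bounded[where x="K\<^sup>2"]) (use assms in auto)
  then show "x \<in> H2" by (simp add: H2_def)
  have "(\<Sum>k. (cmod (x k))\<^sup>2) \<le> K\<^sup>2" by (rule suminf_le_const[OF s assms(1)])
  then have "sqrt (\<Sum>k. (cmod (x k))\<^sup>2) \<le> sqrt (K\<^sup>2)" by (rule real_sqrt_le_mono)
  then show "h2_norm x \<le> K" using assms(2) unfolding h2_norm_def by (metis real_sqrt_abs abs_of_nonneg)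
qed

lemma h2_norm_nonneg: "x \<in> H2 \<Longrightarrow> 0 \<le> h2_norm x"
  by (simp add: h2_norm_def H2_def suminf_nonneg)

lemma h2_norm_sq: "x \<in> H2 \<Longrightarrow> (h2_norm x)\<^sup>2 = (\<Sum>k. (cmod (x k))\<^sup>2)"
  unfolding h2_norm_def H2_def by (simp add: suminf_nonneg)

lemma h2_partial: "x \<in> H2 \<Longrightarrow> (\<Sum>k<N. (cmod (x k))\<^sup>2) \<le> (h2_norm x)\<^sup>2"
  by (simp add: h2_norm_sq) (rule sum_le_suminf, auto simp: H2_def)

lemma h2_partial_sqrt: "sqrt (\<Sum>k<N. (cmod (x k))\<^sup>2) \<le> h2_norm x" if "x \<in> H2"
  using h2_partial[of x N] h2_norm_nonneg[of x] that real_sqrt_le_mono real_sqrt_abs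
  by (metis abs_of_nonneg)

lemma h2_add:
  assumes "x \<in> H2" "y \<in> H2"
  shows "(\<lambda>k. x k + y k) \<in> H2" "h2_norm (\<lambda>k. x k + y k) \<le> h2_norm x + h2_norm y"
proof -
  have *: "(\<Sum>k<N. (cmod (x k + y k))\<^sup>2) \<le> (h2_norm x + h2_norm y)\<^sup>2" for N
  proof -
    have "L2_set (\<lambda>k. cmod (x k + y k)) {..<N} \<le> L2_set (\<lambda>k. cmod (x k) + cmod (y k)) {..<N}"
      by (rule L2_set_mono) (auto simp: norm_triangle_ineq)
    also have "\<dots> \<le> L2_set (\<lambda>k. cmod (x k)) {..<N} + L2_set (\<lambda>k. cmod (y k)) {..<N}"
      by (rule L2_set_triangle_ineq)
    also have "\<dots> \<le> h2_norm x + h2_norm y"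
      using h2_partial_sqrt[OF assms(1), of N] h2_partial_sqrt[OF assms(2), of N]
      by (simp add: L2_set_def)
    finally have "L2_set (\<lambda>k. cmod (x k + y k)) {..<N} \<le> h2_norm x + h2_norm y" .
    then have "(L2_set (\<lambda>k. cmod (x k + y k)) {..<N})\<^sup>2 \<le> (h2_norm x + h2_norm y)\<^sup>2"
      by (rule power_mono) simp
    then show ?thesis by (simp add: L2_set_def sum_nonneg)
  qed
  show "(\<lambda>k. x k + y k) \<in> H2" "h2_norm (\<lambda>k. x k + y k) \<le> h2_norm x + h2_norm y"
    using h2_bound[OF *] h2_norm_nonneg[OF assms(1)] h2_norm_nonneg[OF assms(2)] by auto
qed

lemma h2_scale:
  assumes "x \<in> H2"
  shows "(\<lambda>k. c * x k) \<in> H2" "h2_norm (\<lambda>k. c * x k) \<le> cmod c * h2_norm x"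
proof -
  have *: "(\<Sum>k<N. (cmod (c * x k))\<^sup>2) \<le> (cmod c * h2_norm x)\<^sup>2" for N
  proof -
    have "(\<Sum>k<N. (cmod (c * x k))\<^sup>2) = (cmod c)\<^sup>2 * (\<Sum>k<N. (cmod (x k))\<^sup>2)"
      by (simp add: norm_mult power_mult_distrib sum_distrib_left)
    also have "\<dots> \<le> (cmod c)\<^sup>2 * (h2_norm x)\<^sup>2"
      by (rule mult_left_mono[OF h2_partial[OF assms]]) simp
    finally show ?thesis by (simp add: power_mult_distrib)
  qed
  show "(\<lambda>k. c * x k) \<in> H2" "h2_norm (\<lambda>k. c * x k) \<le> cmod c * h2_norm x"
    using h2_bound[OF *] h2_norm_nonneg[OF assms] by auto
qed

lemma h2_diff:
  assumes "x \<in> H2" "y \<in> H2"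
  shows "(\<lambda>k. x k - y k) \<in> H2" "h2_norm (\<lambda>k. x k - y k) \<le> h2_norm x + h2_norm y"
proof -
  have m: "(\<lambda>k. (-1) * y k) \<in> H2" "h2_norm (\<lambda>k. (-1) * y k) \<le> h2_norm y"
    using h2_scale[OF assms(2), of "-1"] by auto
  have "(\<lambda>k. x k - y k) = (\<lambda>k. x k + (-1) * y k)" by auto
  then show "(\<lambda>k. x k - y k) \<in> H2" "h2_norm (\<lambda>k. x k - y k) \<le> h2_norm x + h2_norm y"
    using h2_add[OF assms(1) m(1)] m(2) by auto
qed

lemma h2_finite:
  assumes "\<And>k. k \<ge> N \<Longrightarrow> x k = 0"
  shows "x \<in> H2"
proof -
  have "(\<Sum>k<M. (cmod (x k))\<^sup>2) \<le> (sqrt (\<Sum>k<N. (cmod (x k))\<^sup>2))\<^sup>2" for M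
  proof -
    have "(\<Sum>k<M. (cmod (x k))\<^sup>2) \<le> (\<Sum>k<max M N. (cmod (x k))\<^sup>2)"
      by (rule sum_mono2) auto
    also have "\<dots> = (\<Sum>k<N. (cmod (x k))\<^sup>2)"
      by (rule sum.mono_neutral_right) (auto simp: assms)
    finally show ?thesis by (simp add: sum_nonneg)
  qed
  then show ?thesis by (rule h2_bound) (simp add: sum_nonneg)
qed

lemma h2_zero: "(\<lambda>k. 0) \<in> H2" "h2_norm (\<lambda>k. 0) = 0"
  by (auto simp: H2_def h2_norm_def)


definition Wa :: "nat \<Rightarrow> (nat \<Rightarrow> complex) \<Rightarrow> nat \<Rightarrow> complex" where
  "Wa n g j = (\<Sum>r<n. g (n*j + r))"

lemma block_one: fixes n m :: nat shows "(\<Sum>r<n. h (n*m + r)) = sum h {m*n..<m*n+n}"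
proof -
  have "sum h {m*n..<m*n+n} = sum h {0+m*n..<n+m*n}" by (simp add: add.commute)
  also have "\<dots> = (\<Sum>r=0..<n. h (r + m*n))" by (rule sum.shift_bounds_nat_ivl)
  finally show ?thesis by (simp add: atLeast0LessThan add.commute mult.commute)
qed

lemma block_sum: fixes n N :: nat shows "(\<Sum>m<N. \<Sum>r<n. h (n*m + r)) = (\<Sum>k<N*n. h k)"
  using sum.nat_group[of h n N] by (simp add: block_one)

lemma cs_sum: "(cmod (\<Sum>r<n. z r))\<^sup>2 \<le> real n * (\<Sum>r<n. (cmod (z r))\<^sup>2)"
proof -
  have "cmod (\<Sum>r<n. z r) \<le> (\<Sum>r<n. cmod (z r) * 1)" by (simp add: norm_sum)
  then have "(cmod (\<Sum>r<n. z r))\<^sup>2 \<le> (\<Sum>r<n. cmod (z r) * 1)\<^sup>2"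
    by (rule power_mono) simp
  also have "\<dots> \<le> (\<Sum>r<n. (cmod (z r))\<^sup>2) * (\<Sum>r<n. 1\<^sup>2)"
    by (rule Cauchy_Schwarz_ineq_sum)
  finally show ?thesis by (simp add: mult.commute)
qed

lemma Wa_H2:
  assumes "g \<in> H2"
  shows "Wa n g \<in> H2"
proof -
  have "(\<Sum>j<N. (cmod (Wa n g j))\<^sup>2) \<le> (sqrt (real n) * h2_norm g)\<^sup>2" for N
  proof -
    have "(\<Sum>j<N. (cmod (Wa n g j))\<^sup>2) \<le> (\<Sum>j<N. real n * (\<Sum>r<n. (cmod (g (n*j+r)))\<^sup>2))"
      unfolding Wa_def by (rule sum_mono) (rule cs_sum)
    also have "\<dots> = real n * (\<Sum>k<N*n. (cmod (g k))\<^sup>2)"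
      by (simp only: sum_distrib_left[symmetric] block_sum[where h="\<lambda>k. (cmod (g k))\<^sup>2"])
    also have "\<dots> \<le> real n * (h2_norm g)\<^sup>2"
      by (rule mult_left_mono[OF h2_partial[OF assms]]) simp
    finally show ?thesis by (simp add: power_mult_distrib)
  qed
  then show ?thesis by (rule h2_bound) (simp add: h2_norm_nonneg assms)
qed

lemma W_div: "0 < n \<Longrightarrow> r < n \<Longrightarrow> (n*m + r) div n = (m::nat)"
  by simp

lemma W_sum_div: "0 < n \<Longrightarrow> (\<Sum>r<n. F ((n*m + r) div n) r) = (\<Sum>r<n. F (m::nat) r)"
  by (rule sum.cong) auto

lemma W_H2:
  assumes "f \<in> H2" "n > 0"
  shows "W n f \<in> H2"
proof -
  have "(\<Sum>k<N. (cmod (W n f k))\<^sup>2) \<le> (sqrt (real n) * h2_norm f)\<^sup>2" for N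
  proof -
    have "(\<Sum>k<N. (cmod (W n f k))\<^sup>2) \<le> (\<Sum>k<N*n. (cmod (W n f k))\<^sup>2)"
      by (rule sum_mono2) (use assms in auto)
    also have "\<dots> = (\<Sum>m<N. \<Sum>r<n. (cmod (W n f (n*m+r)))\<^sup>2)"
      by (rule block_sum[symmetric])
    also have "\<dots> = (\<Sum>m<N. real n * (cmod (f m))\<^sup>2)"
      by (rule sum.cong[OF refl]) (simp add: W_def W_div[OF assms(2)])
    also have "\<dots> = real n * (\<Sum>m<N. (cmod (f m))\<^sup>2)"
      by (simp add: sum_distrib_left)
    also have "\<dots> \<le> real n * (h2_norm f)\<^sup>2"
      by (rule mult_left_mono[OF h2_partial[OF assms(1)]]) simp
    finally show ?thesis by (simp add: power_mult_distrib)
  qed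
  then show ?thesis by (rule h2_bound) (simp add: h2_norm_nonneg assms)
qed

lemma inner_summable:
  assumes "f \<in> H2" "g \<in> H2"
  shows "summable (\<lambda>k. f k * cnj (g k))"
proof -
  have b: "norm (f k * cnj (g k)) \<le> (cmod (f k))\<^sup>2 + (cmod (g k))\<^sup>2" for k
  proof -
    have "norm (f k * cnj (g k)) = cmod (f k) * cmod (g k)" by (simp add: norm_mult)
    also have "\<dots> \<le> (cmod (f k))\<^sup>2 + (cmod (g k))\<^sup>2"
      using sum_squares_bound[of "cmod (f k)" "cmod (g k)"]
        mult_nonneg_nonneg[OF norm_ge_zero norm_ge_zero, of "f k" "g k"] by linarith
    finally show ?thesis .
  qed
  have s: "summable (\<lambda>k. (cmod (f k))\<^sup>2 + (cmod (g k))\<^sup>2)"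
    using assms by (auto simp: H2_def intro: summable_add)
  have "summable (\<lambda>k. norm (f k * cnj (g k)))"
  proof (rule summable_comparison_test[OF _ s])
    show "\<exists>N. \<forall>k\<ge>N. norm (norm (f k * cnj (g k))) \<le> (cmod (f k))\<^sup>2 + (cmod (g k))\<^sup>2"
      using b by (intro exI[of _ 0] allI impI) (simp only: real_norm_def abs_norm_cancel)
  qed
  then show ?thesis by (rule summable_norm_cancel)
qed

lemma W_inner:
  assumes "f \<in> H2" "g \<in> H2" "n > 0"
  shows "h2_inner (W n f) g = h2_inner f (Wa n g)"
proof -
  have s: "summable (\<lambda>k. W n f k * cnj (g k))"
    by (rule inner_summable[OF W_H2[OF assms(1,3)] assms(2)])
  have "(\<lambda>j. sum (\<lambda>k. W n f k * cnj (g k)) {j * n..<j * n + n}) sums h2_inner (W n f) g"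
    unfolding h2_inner_def by (rule sums_group[OF summable_sums[OF s] assms(3)])
  moreover have "sum (\<lambda>k. W n f k * cnj (g k)) {j * n..<j * n + n} = f j * cnj (Wa n g j)" for j
  proof -
    have "sum (\<lambda>k. W n f k * cnj (g k)) {j * n..<j * n + n} = (\<Sum>r<n. W n f (n*j+r) * cnj (g (n*j+r)))"
      by (rule block_one[symmetric])
    also have "\<dots> = (\<Sum>r<n. f j * cnj (g (n*j+r)))"
      unfolding W_def using W_sum_div[OF assms(3), of "\<lambda>m r. f m * cnj (g (n*j+r))" j] by simp
    also have "\<dots> = f j * cnj (Wa n g j)"
      by (simp add: Wa_def sum_distrib_left)
    finally show ?thesis .
  qed
  ultimately have "(\<lambda>j. f j * cnj (Wa n g j)) sums h2_inner (W n f) g" by simp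
  then show ?thesis unfolding h2_inner_def[of f] by (simp add: sums_unique)
qed


lemma e_H2: "(\<lambda>k. if k = j then c else 0) \<in> H2"
  by (rule h2_finite[of "Suc j"]) auto

lemma inner_e: "h2_inner (\<lambda>k. if k = j then 1 else 0) h = cnj (h j)"
proof -
  have "(\<lambda>k. (if k = j then 1 else 0) * cnj (h k)) = (\<lambda>k. if k = j then cnj (h k) else 0)"
    by auto
  then show ?thesis unfolding h2_inner_def using sums_single[of j "\<lambda>k. cnj (h k)"]
    by (simp add: sums_unique[symmetric])
qed

lemma W_adj_eq:
  assumes "n > 0" "g \<in> H2"
  shows "W_adj n g = Wa n g"
  unfolding W_adj_def
proof (rule the_equality)
  show "Wa n g \<in> H2 \<and> (\<forall>f\<in>H2. h2_inner (W n f) g = h2_inner f (Wa n g))"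
    using Wa_H2[OF assms(2)] W_inner[OF _ assms(2) assms(1)] by auto
next
  fix h assume h: "h \<in> H2 \<and> (\<forall>f\<in>H2. h2_inner (W n f) g = h2_inner f h)"
  show "h = Wa n g"
  proof
    fix j :: nat
    let ?e = "\<lambda>k. if k = j then (1::complex) else 0"
    have "cnj (h j) = h2_inner (W n ?e) g" using h e_H2[of j 1] inner_e[of j h] by auto
    also have "\<dots> = cnj (Wa n g j)" using W_inner[OF e_H2 assms(2) assms(1)] inner_e by simp
    finally show "h j = Wa n g j" by simp
  qed
qed

lemma eigsp_I:
  assumes "n > 0" "v \<in> H2" "\<And>k. Wa n v k = lam * v k"
  shows "v \<in> eigsp n lam"
  using assms W_adj_eq[OF assms(1,2)] by (simp add: eigsp_def)


definition Sd :: "nat \<Rightarrow> nat \<Rightarrow> (nat \<Rightarrow> complex) \<Rightarrow> nat \<Rightarrow> complex" where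
  "Sd n d a k = a (k div n^d) / of_nat (n^d)"

definition Rv :: "nat \<Rightarrow> nat \<Rightarrow> complex \<Rightarrow> (nat \<Rightarrow> complex) \<Rightarrow> nat \<Rightarrow> complex" where
  "Rv n m lam a k = (\<Sum>d\<le>k. lam^(d+m) * Sd n d a k)"

lemma Sd_0 [simp]: "Sd n 0 a k = a k"
  by (simp add: Sd_def)

lemma pow_gt: assumes "2 \<le> n" shows "d < n^d"
proof -
  have "d < 2^d" by (rule less_exp)
  also have "(2::nat)^d \<le> n^d" by (rule power_mono) (use assms in auto)
  finally show ?thesis .
qed

lemma Sd_vanish:
  assumes "2 \<le> n" "a 0 = 0" "k < n^d"
  shows "Sd n d a k = 0"
  using assms by (simp add: Sd_def)

lemma Sd_vanish2:
  assumes "2 \<le> n" "a 0 = 0" "k < d"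
  shows "Sd n d a k = 0"
  using Sd_vanish[of n a, OF assms(1,2)] pow_gt[OF assms(1), of d] assms(3) by simp

lemma Rv_ext:
  assumes "2 \<le> n" "a 0 = 0" "k \<le> N"
  shows "(\<Sum>d\<le>N. lam^(d+m) * Sd n d a k) = Rv n m lam a k"
  unfolding Rv_def
  by (rule sum.mono_neutral_right) (use assms Sd_vanish2[of n a, OF assms(1,2)] in auto)

lemma Rv_eigen:
  assumes "2 \<le> n" "a 0 = 0"
  shows "Wa n (Rv n m lam a) j = lam^m * Wa n a j + lam * Rv n m lam a j"
proof -
  define N' where "N' = n*j + n"
  have key: "Rv n m lam a (n*j+r) = lam^m * a (n*j+r) + lam / of_nat n * Rv n m lam a j"
    if r: "r < n" for r
  proof -
    have "Rv n m lam a (n*j+r) = (\<Sum>d\<le>Suc N'. lam^(d+m) * Sd n d a (n*j+r))"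
      by (rule Rv_ext[symmetric]) (use assms r in \<open>auto simp: N'_def\<close>)
    also have "\<dots> = lam^m * a (n*j+r) + (\<Sum>d\<le>N'. lam^(Suc d+m) * Sd n (Suc d) a (n*j+r))"
      by (subst sum.atMost_Suc_shift) simp
    also have "(\<Sum>d\<le>N'. lam^(Suc d+m) * Sd n (Suc d) a (n*j+r))
        = (\<Sum>d\<le>N'. lam / of_nat n * (lam^(d+m) * Sd n d a j))"
    proof (rule sum.cong[OF refl])
      fix d
      have "(n*j+r) div n^(Suc d) = j div n^d"
        using r by (simp add: div_mult2_eq)
      then show "lam^(Suc d+m) * Sd n (Suc d) a (n*j+r) = lam / of_nat n * (lam^(d+m) * Sd n d a j)"
        by (simp add: Sd_def)
    qed
    also have "\<dots> = lam / of_nat n * Rv n m lam a j"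
    proof -
      have "1 * j \<le> n * j" using mult_le_mono1[of 1 n j] assms(1) by simp
    then have "j \<le> N'" unfolding N'_def by linarith
    then show ?thesis
      by (subst Rv_ext[of n a j N', symmetric, OF assms]) (auto simp: sum_distrib_left)
    qed
    finally show ?thesis .
  qed
  have "Wa n (Rv n m lam a) j = (\<Sum>r<n. lam^m * a (n*j+r) + lam / of_nat n * Rv n m lam a j)"
    unfolding Wa_def by (rule sum.cong) (auto simp: key)
  also have "\<dots> = lam^m * Wa n a j + lam * Rv n m lam a j"
    using assms(1) by (simp add: sum.distrib Wa_def sum_distrib_left)
  finally show ?thesis .
qed


lemma div_sum_bound:
  assumes "a \<in> H2" "0 < p"
  shows "(\<Sum>k<N. (cmod (a (k div p)))\<^sup>2) \<le> real p * (h2_norm a)\<^sup>2"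
proof -
  have "(\<Sum>k<N. (cmod (a (k div p)))\<^sup>2) \<le> (\<Sum>k<N*p. (cmod (a (k div p)))\<^sup>2)"
    by (rule sum_mono2) (use assms in auto)
  also have "\<dots> = (\<Sum>m<N. \<Sum>r<p. (cmod (a ((p*m+r) div p)))\<^sup>2)"
    by (rule block_sum[symmetric])
  also have "\<dots> = (\<Sum>m<N. real p * (cmod (a m))\<^sup>2)"
    by (rule sum.cong[OF refl]) (simp add: W_div[OF assms(2)])
  also have "\<dots> = real p * (\<Sum>m<N. (cmod (a m))\<^sup>2)"
    by (simp add: sum_distrib_left)
  also have "\<dots> \<le> real p * (h2_norm a)\<^sup>2"
    by (rule mult_left_mono[OF h2_partial[OF assms(1)]]) simp
  finally show ?thesis .
qed

lemma Sd_sum_bound: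
  assumes "a \<in> H2" "0 < n"
  shows "(\<Sum>k<N. (cmod (Sd n d a k))\<^sup>2) \<le> (h2_norm a)\<^sup>2 / real n ^ d"
proof -
  have p: "0 < n^d" using assms(2) by simp
  have "(\<Sum>k<N. (cmod (Sd n d a k))\<^sup>2) = (\<Sum>k<N. (cmod (a (k div n^d)))\<^sup>2) / (real n ^ d)\<^sup>2"
    by (simp add: Sd_def norm_divide sum_divide_distrib power_divide norm_power)
  also have "\<dots> \<le> (real (n^d) * (h2_norm a)\<^sup>2) / (real n ^ d)\<^sup>2"
    by (rule divide_right_mono[OF div_sum_bound[OF assms(1) p]]) simp
  also have "\<dots> = (h2_norm a)\<^sup>2 / real n ^ d"
    using assms(2) by (simp add: power2_eq_square)
  finally show ?thesis .
qed

definition good :: "nat \<Rightarrow> (nat \<Rightarrow> complex) \<Rightarrow> bool" where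
  "good n a \<longleftrightarrow> (\<exists>L U. 1 \<le> L \<and> U \<le> n * L \<and> (\<forall>k. (k < L \<or> U \<le> k) \<longrightarrow> a k = 0))"

lemma good_H2: "good n a \<Longrightarrow> a \<in> H2"
  unfolding good_def by (auto intro: h2_finite)

lemma good_0: "good n a \<Longrightarrow> a 0 = 0"
  unfolding good_def by auto

lemma sq_single:
  fixes f :: "nat \<Rightarrow> complex"
  assumes "finite S" "\<And>d d'. d \<in> S \<Longrightarrow> d' \<in> S \<Longrightarrow> f d \<noteq> 0 \<Longrightarrow> f d' \<noteq> 0 \<Longrightarrow> d = d'"
  shows "(cmod (sum f S))\<^sup>2 \<le> (\<Sum>d\<in>S. (cmod (f d))\<^sup>2)"
proof (cases "\<exists>d0\<in>S. f d0 \<noteq> 0")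
  case False
  then show ?thesis by (simp add: sum_nonneg)
next
  case True
  then obtain d0 where d0: "d0 \<in> S" "f d0 \<noteq> 0" by auto
  have "sum f S = f d0 + sum f (S - {d0})" by (rule sum.remove[OF assms(1) d0(1)])
  also have "sum f (S - {d0}) = 0"
    by (rule sum.neutral) (use assms(2) d0 in blast)
  finally have "sum f S = f d0" by simp
  moreover have "(cmod (f d0))\<^sup>2 \<le> (\<Sum>d\<in>S. (cmod (f d))\<^sup>2)"
    by (rule member_le_sum) (use assms d0 in auto)
  ultimately show ?thesis by simp
qed

lemma Sd_unique:
  assumes "good n a" "2 \<le> n" "Sd n d a k \<noteq> 0" "Sd n d' a k \<noteq> 0"
  shows "d = d'"
proof -
  obtain L U where LU: "1 \<le> L" "U \<le> n * L" "\<And>k. (k < L \<or> U \<le> k) \<Longrightarrow> a k = 0"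
    using assms(1) unfolding good_def by auto
  have bnd: "n^e * L \<le> k \<and> k < n^e * U" if "Sd n e a k \<noteq> 0" for e
  proof -
    have "a (k div n^e) \<noteq> 0" using that by (simp add: Sd_def)
    then have "L \<le> k div n^e" "k div n^e < U" using LU(3)[of "k div n^e"] by force+
    moreover have "0 < n^e" using assms(2) by simp
    ultimately show ?thesis
      using div_less_iff_less_mult[of "n^e" k L] div_less_iff_less_mult[of "n^e" k U]
      by (simp add: mult.commute not_less[symmetric])
  qed
  have no: False if "e < e'" "Sd n e a k \<noteq> 0" "Sd n e' a k \<noteq> 0" for e e'
  proof -
    have "n^e * U \<le> n^e * (n * L)" using LU(2) by simp
    also have "\<dots> = n^(Suc e) * L" by simp
    also have "\<dots> \<le> n^e' * L"
      using that(1) assms(2) by (intro mult_right_mono power_increasing) auto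
    finally show False using bnd[OF that(2)] bnd[OF that(3)] by linarith
  qed
  show ?thesis using no[of d d'] no[of d' d] assms(3,4) by (cases "d < d'"; cases "d' < d") auto
qed

lemma LN:
  assumes g: "good n a" and n: "2 \<le> n"
    and K: "\<And>N. (\<Sum>d<N. (cmod (\<gamma> d))\<^sup>2 / real n ^ d) \<le> K" "0 \<le> K"
  shows "(\<lambda>k. \<Sum>d\<le>k. \<gamma> d * Sd n d a k) \<in> H2"
    "h2_norm (\<lambda>k. \<Sum>d\<le>k. \<gamma> d * Sd n d a k) \<le> sqrt K * h2_norm a"
proof -
  have aH: "a \<in> H2" by (rule good_H2[OF g])
  have "(\<Sum>k<N. (cmod (\<Sum>d\<le>k. \<gamma> d * Sd n d a k))\<^sup>2) \<le> (sqrt K * h2_norm a)\<^sup>2" for N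
  proof -
    have "(\<Sum>k<N. (cmod (\<Sum>d\<le>k. \<gamma> d * Sd n d a k))\<^sup>2)
        \<le> (\<Sum>k<N. \<Sum>d\<le>k. (cmod (\<gamma> d * Sd n d a k))\<^sup>2)"
    proof (rule sum_mono, rule sq_single)
      fix k d d'
      assume "\<gamma> d * Sd n d a k \<noteq> 0" "\<gamma> d' * Sd n d' a k \<noteq> 0"
      then show "d = d'" using Sd_unique[OF g n, of d k d'] by auto
    qed simp
    also have "\<dots> \<le> (\<Sum>k<N. \<Sum>d<N. (cmod (\<gamma> d * Sd n d a k))\<^sup>2)"
      by (rule sum_mono, rule sum_mono2) auto
    also have "\<dots> = (\<Sum>d<N. (cmod (\<gamma> d))\<^sup>2 * (\<Sum>k<N. (cmod (Sd n d a k))\<^sup>2))"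
      by (subst sum.swap) (simp add: norm_mult power_mult_distrib sum_distrib_left)
    also have "\<dots> \<le> (\<Sum>d<N. (cmod (\<gamma> d))\<^sup>2 * ((h2_norm a)\<^sup>2 / real n ^ d))"
      by (rule sum_mono, rule mult_left_mono[OF Sd_sum_bound[OF aH]]) (use n in auto)
    also have "\<dots> = (\<Sum>d<N. (cmod (\<gamma> d))\<^sup>2 / real n ^ d) * (h2_norm a)\<^sup>2"
      by (simp add: sum_distrib_right)
    also have "\<dots> \<le> K * (h2_norm a)\<^sup>2"
      by (rule mult_right_mono[OF K(1)]) simp
    also have "\<dots> = (sqrt K * h2_norm a)\<^sup>2"
      using K(2) by (simp add: power_mult_distrib)
    finally show ?thesis .
  qed
  moreover have "0 \<le> sqrt K * h2_norm a" using h2_norm_nonneg[OF aH] K(2) by simp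
  ultimately show "(\<lambda>k. \<Sum>d\<le>k. \<gamma> d * Sd n d a k) \<in> H2"
    "h2_norm (\<lambda>k. \<Sum>d\<le>k. \<gamma> d * Sd n d a k) \<le> sqrt K * h2_norm a"
    by (rule h2_bound)+
qed


lemma Ico_lebesgue: "l \<le> u \<Longrightarrow> measure lebesgue {l..<u::real} = u - l"
  by (subst measure_completion) auto

lemma Ico_fmeas: "{l..<u::real} \<in> fmeasurable lebesgue"
proof -
  have "{l..<u} \<subseteq> {l..u}" by auto
  moreover have "{l..u} \<in> fmeasurable lebesgue"
    using lmeasurable_cbox[of l u] by (simp add: box_real(2))
  moreover have "{l..<u} \<in> sets lebesgue"
    using sets_completionI_sets[of "{l..<u}" lborel] by simp
  ultimately show ?thesis using fmeasurableI2 by blast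
qed

lemma A_dense:
  assumes "circle_measurable A" "circle_measure A = 1" "0 \<le> t0" "t0 < 1" "0 < s"
  shows "\<exists>t\<in>circle_param A. t0 \<le> t \<and> t < t0 + s"
proof (rule ccontr)
  assume no: "\<not> ?thesis"
  define u where "u = min 1 (t0 + s)"
  have tu: "t0 < u" using assms by (simp add: u_def)
  let ?C = "circle_param A" and ?I = "{t0..<u}"
  have disj: "?C \<inter> ?I = {}" using no by (auto simp: u_def)
  have Csub: "?C \<subseteq> {0..<1}" by (auto simp: circle_param_def)
  have Isub: "?I \<subseteq> {0..<1}" using assms by (auto simp: u_def)
  have Cm: "?C \<in> sets lebesgue" using assms(1) by (simp add: circle_measurable_def)
  have Cf: "?C \<in> fmeasurable lebesgue" by (rule fmeasurableI2[OF Ico_fmeas Csub Cm])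
  have If: "?I \<in> fmeasurable lebesgue" by (rule Ico_fmeas)
  have "measure lebesgue (?C \<union> ?I) = measure lebesgue ?C + measure lebesgue ?I"
    using measure_Un2[OF Cf If] disj by (simp add: Diff_triv Int_commute)
  also have "\<dots> = 1 + (u - t0)"
    using assms(2) tu by (simp add: circle_measure_def Ico_lebesgue)
  finally have eq: "measure lebesgue (?C \<union> ?I) = 1 + (u - t0)" .
  have "measure lebesgue (?C \<union> ?I) \<le> measure lebesgue {0..<1::real}"
    by (rule measure_mono_fmeasurable) (use Csub Isub Cf If Ico_fmeas in auto)
  then show False using eq tu by (simp add: Ico_lebesgue)
qed

lemma A_near:
  assumes "circle_measurable A" "circle_measure A = 1" "0 \<le> t0" "t0 < 1" "0 < r"
  shows "\<exists>lam\<in>A. cmod lam = 1 \<and> cmod (lam - cis (2*pi*t0)) < r"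
proof -
  have "((\<lambda>t::real. cis (2*pi*t)) \<longlongrightarrow> cis (2*pi*t0)) (at t0)" by (intro tendsto_intros)
  from LIM_D[OF this assms(5)] obtain s where s: "s > 0"
    "\<And>x. x \<noteq> t0 \<and> norm (x - t0) < s \<Longrightarrow> norm (cis (2*pi*x) - cis (2*pi*t0)) < r"
    by blast
  obtain t where t: "t \<in> circle_param A" "t0 \<le> t" "t < t0 + s"
    using A_dense[OF assms(1-4) s(1)] by auto
  have "norm (cis (2*pi*t) - cis (2*pi*t0)) < r"
    using s(2)[of t] t assms(5) by (cases "t = t0") auto
  moreover have "cis (2*pi*t) \<in> A" using t(1) by (simp add: circle_param_def)
  ultimately show ?thesis by (intro bexI[of _ "cis (2*pi*t)"]) auto
qed


definition om :: "nat \<Rightarrow> nat \<Rightarrow> complex" where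
  "om M i = cis (2*pi*real i/real M)"

lemma cis_ne_1:
  assumes "0 < M" "e < M" "j < M" "e \<noteq> j"
  shows "cis (2*pi*(real e - real j)/real M) \<noteq> 1"
proof
  assume "cis (2*pi*(real e - real j)/real M) = 1"
  then have "exp (\<i> * complex_of_real (2*pi*(real e - real j)/real M)) = 1"
    by (simp add: cis_conv_exp)
  then obtain k :: int where k: "2*pi*(real e - real j)/real M = of_int (2*k) * pi"
    by (auto simp: exp_eq_1)
  then have "2*pi*(real e - real j) = 2*pi*(real_of_int k * real M)"
    using assms(1) by (simp add: field_simps)
  then have "real e - real j = real_of_int k * real M"
    using mult_left_cancel[of "2*pi" "real e - real j" "real_of_int k * real M"] by simp
  then have "int e - int j = k * int M"
    by (metis of_int_eq_iff of_int_mult of_int_diff of_int_of_nat_eq)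
  moreover have "- int M < int e - int j" "int e - int j < int M" using assms by auto
  ultimately have "k = 0"
    by (smt (verit, ccfv_threshold) assms(1) mult_le_cancel_right1 mult_minus_left of_nat_0_less_iff)
  then show False using \<open>int e - int j = k * int M\<close> assms(4) by simp
qed

lemma roots_sum:
  assumes "0 < M" "e < M" "j < M"
  shows "(\<Sum>i<M. cnj (om M i)^j * om M i^e) = (if e = j then of_nat M else 0)"
proof -
  define z where "z = cis (2*pi*(real e - real j)/real M)"
  have tm: "cnj (om M i)^j * om M i^e = z^i" for i
  proof -
    have "cnj (om M i)^j * om M i^e = cis (real e * (2*pi*real i/real M) - real j * (2*pi*real i/real M))"
      unfolding om_def cis_cnj by (simp only: Complex.DeMoivre cis_mult) (simp add: algebra_simps)
    also have "\<dots> = z^i" unfolding z_def Complex.DeMoivre by (rule arg_cong[where f=cis]) (simp add: field_simps diff_divide_distrib)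
    finally show ?thesis .
  qed
  have zM: "z^M = 1"
  proof -
    have "real M * (2*pi*(real e - real j)/real M) = 2*pi*(real e - real j)"
      using assms(1) by simp
    then have "z^M = cis (2*pi*(real e - real j))" unfolding z_def Complex.DeMoivre
      by simp
    also have "\<dots> = 1"
    proof -
      have "real e - real j = of_int (int e - int j)" by simp
      then have "real e - real j \<in> \<int>" by (metis Ints_of_int)
      then show ?thesis by (rule cis_multiple_2pi)
    qed
    finally show ?thesis .
  qed
  show ?thesis
  proof (cases "e = j")
    case True
    then have "z = 1" by (simp add: z_def)
    then show ?thesis using True tm[symmetric] by simp
  next
    case False
    then have "z \<noteq> 1" using cis_ne_1[OF assms False] by (simp add: z_def)
    then show ?thesis using False by (simp add: tm sum_gp_strict zM)
  qed
qed


inductive_set Sp :: "nat \<Rightarrow> complex set \<Rightarrow> (nat \<Rightarrow> complex) set" for n A where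
  Sp0: "(\<lambda>k. 0) \<in> Sp n A"
| SpI: "v \<in> eigsp n lam \<Longrightarrow> lam \<in> A \<Longrightarrow> y \<in> Sp n A \<Longrightarrow> (\<lambda>k. c * v k + y k) \<in> Sp n A"

lemma Sp_H2: "y \<in> Sp n A \<Longrightarrow> y \<in> H2"
proof (induction rule: Sp.induct)
  case Sp0 then show ?case by (rule h2_zero)
next
  case (SpI v lam y c)
  then have "v \<in> H2" by (simp add: eigsp_def)
  then show ?case using h2_add(1)[OF h2_scale(1) SpI.IH] by blast
qed

lemma Sp_add: "x \<in> Sp n A \<Longrightarrow> y \<in> Sp n A \<Longrightarrow> (\<lambda>k. x k + y k) \<in> Sp n A"
proof (induction x rule: Sp.induct)
  case Sp0 then show ?case by simp
next
  case (SpI v lam y' c)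
  have "(\<lambda>k. c * v k + y' k + y k) = (\<lambda>k. c * v k + (y' k + y k))" by (simp add: add.assoc)
  then show ?case using Sp.SpI[OF SpI.hyps(1,2) SpI.IH[OF SpI.prems]] by simp
qed

lemma Sp_scale: "x \<in> Sp n A \<Longrightarrow> (\<lambda>k. b * x k) \<in> Sp n A"
proof (induction x rule: Sp.induct)
  case Sp0 then show ?case using Sp.Sp0 by simp
next
  case (SpI v lam y c)
  have "(\<lambda>k. b * (c * v k + y k)) = (\<lambda>k. (b * c) * v k + b * y k)" by (simp add: algebra_simps)
  then show ?case using Sp.SpI[OF SpI.hyps(1,2) SpI.IH] by simp
qed

lemma Sp_sum:
  fixes M :: nat
  assumes "\<And>i. i < M \<Longrightarrow> v i \<in> eigsp n (l i) \<and> l i \<in> A"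
  shows "(\<lambda>k. \<Sum>i<M. c i * v i k) \<in> Sp n A"
  using assms
proof (induction M)
  case 0 then show ?case using Sp.Sp0 by simp
next
  case (Suc M)
  have "(\<lambda>k. \<Sum>i<Suc M. c i * v i k) = (\<lambda>k. c M * v M k + (\<Sum>i<M. c i * v i k))"
    by (simp add: add.commute)
  then show ?case using Sp.SpI[of "v M" n "l M" A "\<lambda>k. \<Sum>i<M. c i * v i k" "c M"] Suc by simp
qed

lemma Sp_repr:
  "y \<in> Sp n A \<Longrightarrow> \<exists>(N::nat) c v lam. (\<forall>i<N. lam i \<in> A \<and> v i \<in> eigsp n (lam i)) \<and> y = (\<lambda>k. \<Sum>i<N. c i * v i k)"
proof (induction rule: Sp.induct)
  case Sp0
  show ?case by (rule exI[of _ "0::nat"]) auto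
next
  case (SpI v0 lam0 y c0)
  then obtain N :: nat and c v lam where h: "\<forall>i<N. lam i \<in> A \<and> v i \<in> eigsp n (lam i)" "y = (\<lambda>k. \<Sum>i<N. c i * v i k)"
    by blast
  let ?c = "c(N := c0)" and ?v = "v(N := v0)" and ?l = "lam(N := lam0)"
  have "(\<lambda>k. c0 * v0 k + y k) = (\<lambda>k. \<Sum>i<Suc N. ?c i * ?v i k)"
    using h(2) by (simp add: add.commute)
  moreover have "\<forall>i<Suc N. ?l i \<in> A \<and> ?v i \<in> eigsp n (?l i)" using h(1) SpI.hyps by (auto simp: less_Suc_eq)
  ultimately show ?case by blast
qed

definition Ap :: "nat \<Rightarrow> complex set \<Rightarrow> (nat \<Rightarrow> complex) \<Rightarrow> bool" where
  "Ap n A x \<longleftrightarrow> x \<in> H2 \<and> (\<forall>\<epsilon>>0. \<exists>y\<in>Sp n A. h2_norm (\<lambda>k. x k - y k) < \<epsilon>)"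

lemma Ap_Sp: "y \<in> Sp n A \<Longrightarrow> Ap n A y"
  unfolding Ap_def using Sp_H2 h2_zero(2) by (auto intro!: bexI[of _ y])

lemma Ap_H2: "Ap n A x \<Longrightarrow> x \<in> H2" by (simp add: Ap_def)

lemma Ap_lim:
  assumes "x \<in> H2" "\<And>\<epsilon>. \<epsilon> > 0 \<Longrightarrow> \<exists>z. Ap n A z \<and> h2_norm (\<lambda>k. x k - z k) < \<epsilon>"
  shows "Ap n A x"
  unfolding Ap_def
proof (intro conjI assms(1) allI impI)
  fix \<epsilon> :: real assume e: "\<epsilon> > 0"
  have e2: "\<epsilon>/2 > 0" using e by simp
  obtain z where z: "Ap n A z" "h2_norm (\<lambda>k. x k - z k) < \<epsilon>/2" using assms(2)[OF e2] by blast
  obtain y where y: "y \<in> Sp n A" "h2_norm (\<lambda>k. z k - y k) < \<epsilon>/2" using z(1) e2 unfolding Ap_def by blast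
  have zH: "z \<in> H2" using z(1) by (rule Ap_H2)
  have yH: "y \<in> H2" using y(1) by (rule Sp_H2)
  have "h2_norm (\<lambda>k. x k - y k) = h2_norm (\<lambda>k. (x k - z k) + (z k - y k))" by simp
  also have "\<dots> \<le> h2_norm (\<lambda>k. x k - z k) + h2_norm (\<lambda>k. z k - y k)"
    by (rule h2_add(2)[OF h2_diff(1)[OF assms(1) zH] h2_diff(1)[OF zH yH]])
  finally show "\<exists>y\<in>Sp n A. h2_norm (\<lambda>k. x k - y k) < \<epsilon>" using y z by (intro bexI[of _ y]) auto
qed

lemma Ap_add:
  assumes "Ap n A x" "Ap n A x'"
  shows "Ap n A (\<lambda>k. x k + x' k)"
  unfolding Ap_def
proof (intro conjI allI impI)
  show "(\<lambda>k. x k + x' k) \<in> H2" using h2_add(1)[OF Ap_H2[OF assms(1)] Ap_H2[OF assms(2)]] .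
  fix \<epsilon> :: real assume e: "\<epsilon> > 0"
  have e2: "\<epsilon>/2 > 0" using e by simp
  obtain y where y: "y \<in> Sp n A" "h2_norm (\<lambda>k. x k - y k) < \<epsilon>/2" using assms(1) e2 unfolding Ap_def by blast
  obtain y' where y': "y' \<in> Sp n A" "h2_norm (\<lambda>k. x' k - y' k) < \<epsilon>/2" using assms(2) e2 unfolding Ap_def by blast
  have d1: "(\<lambda>k. x k - y k) \<in> H2" by (rule h2_diff(1)[OF Ap_H2[OF assms(1)] Sp_H2[OF y(1)]])
  have d2: "(\<lambda>k. x' k - y' k) \<in> H2" by (rule h2_diff(1)[OF Ap_H2[OF assms(2)] Sp_H2[OF y'(1)]])
  have "h2_norm (\<lambda>k. x k + x' k - (y k + y' k)) = h2_norm (\<lambda>k. (x k - y k) + (x' k - y' k))"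
    by (simp add: algebra_simps)
  also have "\<dots> \<le> h2_norm (\<lambda>k. x k - y k) + h2_norm (\<lambda>k. x' k - y' k)"
    by (rule h2_add(2)[OF d1 d2])
  finally show "\<exists>y\<in>Sp n A. h2_norm (\<lambda>k. x k + x' k - y k) < \<epsilon>"
    using y y' Sp_add[OF y(1) y'(1)] by (intro bexI[of _ "\<lambda>k. y k + y' k"]) auto
qed

lemma Ap_scale:
  assumes "Ap n A x"
  shows "Ap n A (\<lambda>k. b * x k)"
  unfolding Ap_def
proof (intro conjI allI impI)
  show "(\<lambda>k. b * x k) \<in> H2" using h2_scale(1)[OF Ap_H2[OF assms(1)]] .
  fix \<epsilon> :: real assume e: "\<epsilon> > 0"
  have e': "\<epsilon> / (cmod b + 1) > 0" using e by (intro divide_pos_pos) (auto intro: add_nonneg_pos)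
  obtain y where y: "y \<in> Sp n A" "h2_norm (\<lambda>k. x k - y k) < \<epsilon> / (cmod b + 1)"
    using assms(1) e' unfolding Ap_def by blast
  have d1: "(\<lambda>k. x k - y k) \<in> H2" by (rule h2_diff(1)[OF Ap_H2[OF assms(1)] Sp_H2[OF y(1)]])
  have "h2_norm (\<lambda>k. b * x k - b * y k) = h2_norm (\<lambda>k. b * (x k - y k))"
    by (simp add: algebra_simps)
  also have "\<dots> \<le> cmod b * h2_norm (\<lambda>k. x k - y k)" by (rule h2_scale(2)[OF d1])
  also have "\<dots> \<le> (cmod b + 1) * h2_norm (\<lambda>k. x k - y k)"
    by (rule mult_right_mono) (auto simp: h2_norm_nonneg[OF d1])
  also have "\<dots> < (cmod b + 1) * (\<epsilon> / (cmod b + 1))"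
    by (rule mult_strict_left_mono[OF y(2)]) (use norm_ge_zero[of b] in linarith)
  also have "\<dots> = \<epsilon>" using norm_ge_zero[of b] by (simp add: add_nonneg_eq_0_iff)
  finally show "\<exists>y\<in>Sp n A. h2_norm (\<lambda>k. b * x k - y k) < \<epsilon>"
    using Sp_scale[OF y(1), of b] by (intro bexI[of _ "\<lambda>k. b * y k"]) auto
qed

lemma Ap_zero: "Ap n A (\<lambda>k. 0)" by (rule Ap_Sp[OF Sp.Sp0])

lemma Ap_diff:
  assumes "Ap n A x" "Ap n A x'"
  shows "Ap n A (\<lambda>k. x k - x' k)"
  using Ap_add[OF assms(1) Ap_scale[OF assms(2), of "-1"]] by simp

lemma Ap_sum:
  fixes M :: nat
  assumes "\<And>i. i < M \<Longrightarrow> Ap n A (f i)"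
  shows "Ap n A (\<lambda>k. \<Sum>i<M. f i k)"
  using assms
proof (induction M)
  case 0 then show ?case using Ap_zero by simp
next
  case (Suc M)
  then show ?case using Ap_add[of n A "\<lambda>k. \<Sum>i<M. f i k" "f M"] by simp
qed

lemma Ap_cong: "Ap n A x \<Longrightarrow> (\<And>k. x k = y k) \<Longrightarrow> Ap n A y"
proof -
  assume "Ap n A x" "\<And>k. x k = y k"
  then have "x = y" by auto
  then show "Ap n A y" using \<open>Ap n A x\<close> by simp
qed


definition e0 :: "nat \<Rightarrow> complex" where "e0 k = (if k = 0 then 1 else 0)"

lemma e0_H2: "e0 \<in> H2"
  unfolding e0_def by (rule e_H2)

lemma Wa_e0: "0 < n \<Longrightarrow> Wa n e0 j = (if j = 0 then 1 else 0)"
proof -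
  assume n: "0 < n"
  have "Wa n e0 j = (\<Sum>r<n. if r = 0 \<and> j = 0 then 1 else 0)"
    unfolding Wa_def e0_def by (rule sum.cong) auto
  also have "\<dots> = (if j = 0 then 1 else 0)"
    using n by (cases "j = 0") (auto simp: sum.delta)
  finally show ?thesis .
qed

definition seed :: "nat \<Rightarrow> (nat \<Rightarrow> complex) \<Rightarrow> complex \<Rightarrow> bool" where
  "seed n a \<mu> \<longleftrightarrow> good n a \<and> (\<forall>j. Wa n a j = (if j = 0 then \<mu> else 0))"

definition G :: "nat \<Rightarrow> complex \<Rightarrow> complex \<Rightarrow> (nat \<Rightarrow> complex) \<Rightarrow> nat \<Rightarrow> complex" where
  "G n \<mu> lam a k = \<mu> * e0 k + Rv n 1 lam a k - Rv n 0 lam a k"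

lemma geo_half: "(\<Sum>d<N. (1/2::real)^d) = 2 - 2 * (1/2)^N"
  by (induction N) auto

lemma geo_le: assumes "2 \<le> n" shows "1 / real n ^ d \<le> (1/2::real)^d"
proof -
  have "(2::real)^d \<le> real n ^ d" by (rule power_mono) (use assms in auto)
  then show ?thesis by (simp add: power_one_over divide_simps)
qed

lemma geo_sum2: assumes "2 \<le> n" shows "(\<Sum>d<N. 1 / real n ^ d) \<le> 2"
proof -
  have "(\<Sum>d<N. 1 / real n ^ d) \<le> (\<Sum>d<N. (1/2::real)^d)"
    by (rule sum_mono) (rule geo_le[OF assms])
  also have "\<dots> \<le> 2" by (simp add: geo_half)
  finally show ?thesis .
qed

lemma geo_tail: "(\<Sum>d\<in>{D..<N}. (1/2::real)^d) \<le> 2 * (1/2)^D"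
proof (cases "D \<le> N")
  case True
  have "(\<Sum>d\<in>{0..<D}. (1/2::real)^d) + (\<Sum>d\<in>{D..<N}. (1/2::real)^d) = (\<Sum>d\<in>{0..<N}. (1/2::real)^d)"
    by (rule sum.atLeastLessThan_concat) (use True in auto)
  then have "(\<Sum>d\<in>{D..<N}. (1/2::real)^d) = (2 - 2 * (1/2)^N) - (2 - 2 * (1/2)^D)"
    using geo_half[of D] geo_half[of N] by (simp add: atLeast0LessThan)
  then show ?thesis by simp
next
  case False then show ?thesis by simp
qed

lemma Rv_H2:
  assumes "good n a" "2 \<le> n" "cmod lam = 1"
  shows "Rv n m lam a \<in> H2"
proof -
  have "(\<lambda>k. \<Sum>d\<le>k. lam^(d+m) * Sd n d a k) \<in> H2"
  proof (rule LN(1)[OF assms(1,2)])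
    show "(\<Sum>d<N. (cmod (lam^(d+m)))\<^sup>2 / real n ^ d) \<le> 2" for N
      using geo_sum2[OF assms(2), of N] assms(3) by (simp add: norm_power)
  qed simp
  then show ?thesis by (simp add: Rv_def[abs_def])
qed

lemma Sd_as_sum:
  assumes "2 \<le> n" "a 0 = 0"
  shows "Sd n e a k = (\<Sum>d\<le>k. (if d = e then 1 else 0) * Sd n d a k)"
proof -
  have "(\<Sum>d\<le>k. (if d = e then 1 else 0) * Sd n d a k) = (\<Sum>d\<le>k. if d = e then Sd n d a k else 0)"
    by (rule sum.cong) auto
  also have "\<dots> = (if e \<le> k then Sd n e a k else 0)" by (simp add: sum.delta)
  also have "\<dots> = Sd n e a k" using Sd_vanish2[of n a k e, OF assms] by auto
  finally show ?thesis by simp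
qed

lemma Sd_H2:
  assumes "good n a" "2 \<le> n"
  shows "Sd n e a \<in> H2"
proof -
  have H: "(\<lambda>k. \<Sum>d\<le>k. (if d = e then 1 else 0) * Sd n d a k) \<in> H2"
  proof (rule LN(1)[OF assms(1,2)])
    show "(\<Sum>d<N. (cmod (if d = e then 1 else 0 :: complex))\<^sup>2 / real n ^ d) \<le> 1" for N
    proof -
      have "(\<Sum>d<N. (cmod (if d = e then 1 else 0 :: complex))\<^sup>2 / real n ^ d)
            = (\<Sum>d<N. if d = e then 1 / real n ^ d else 0)"
        by (rule sum.cong) auto
      also have "\<dots> = (if e < N then 1 / real n ^ e else 0)" by (simp add: sum.delta)
      also have "\<dots> \<le> 1" using assms(2) by (auto simp: divide_le_eq_1 one_le_power)
      finally show ?thesis .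
    qed
  qed simp
  have eq: "Sd n e a = (\<lambda>k. \<Sum>d\<le>k. (if d = e then 1 else 0) * Sd n d a k)"
    using Sd_as_sum[of n a, OF assms(2) good_0[OF assms(1)]] by (intro ext) blast
  show ?thesis by (subst eq) (rule H)
qed

lemma G_eig:
  assumes "seed n a \<mu>" "2 \<le> n" "cmod lam = 1"
  shows "G n \<mu> lam a \<in> eigsp n lam"
proof -
  have g: "good n a" and W: "\<And>j. Wa n a j = (if j = 0 then \<mu> else 0)"
    using assms(1) by (auto simp: seed_def)
  have a0: "a 0 = 0" by (rule good_0[OF g])
  have H: "G n \<mu> lam a \<in> H2"
  proof -
    have "(\<lambda>k. \<mu> * e0 k + Rv n 1 lam a k) \<in> H2"
      by (rule h2_add(1)[OF h2_scale(1)[OF e0_H2] Rv_H2[OF g assms(2,3)]])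
    then have "(\<lambda>k. (\<mu> * e0 k + Rv n 1 lam a k) - Rv n 0 lam a k) \<in> H2"
      by (rule h2_diff(1)[OF _ Rv_H2[OF g assms(2,3)]])
    then show ?thesis by (simp add: G_def[abs_def])
  qed
  have "Wa n (G n \<mu> lam a) j = lam * G n \<mu> lam a j" for j
  proof -
    have "Wa n (G n \<mu> lam a) j = \<mu> * Wa n e0 j + Wa n (Rv n 1 lam a) j - Wa n (Rv n 0 lam a) j"
      by (simp add: Wa_def G_def sum.distrib sum_subtractf sum_distrib_left)
    also have "\<dots> = \<mu> * (if j = 0 then 1 else 0) + (lam * Wa n a j + lam * Rv n 1 lam a j)
                    - (Wa n a j + lam * Rv n 0 lam a j)"
      using Wa_e0[of n j] Rv_eigen[of n a 1 lam j, OF assms(2) a0] Rv_eigen[of n a 0 lam j, OF assms(2) a0]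
        assms(2) by simp
    also have "\<dots> = lam * G n \<mu> lam a j"
      by (simp add: W G_def e0_def algebra_simps)
    finally show ?thesis .
  qed
  then show ?thesis using eigsp_I[of n "G n \<mu> lam a" lam] H assms(2) by simp
qed


definition Tj :: "nat \<Rightarrow> complex \<Rightarrow> (nat \<Rightarrow> complex) \<Rightarrow> nat \<Rightarrow> nat \<Rightarrow> complex" where
  "Tj n \<mu> a j k = (if j = 0 then \<mu> * e0 k else 0) + (if 0 < j then Sd n (j-1) a k else 0) - Sd n j a k"

lemma G_expand:
  "G n \<mu> lam a k = \<mu> * e0 k + (\<Sum>d\<le>k. (lam^(d+1) - lam^d) * Sd n d a k)"
  by (simp add: G_def Rv_def sum_subtractf left_diff_distrib)

lemma Tj_expand:
  assumes "2 \<le> n" "a 0 = 0"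
  shows "Tj n \<mu> a j k = (if j = 0 then \<mu> * e0 k else 0)
     + (\<Sum>d\<le>k. ((if d+1 = j then 1 else 0) - (if d = j then 1 else 0)) * Sd n d a k)"
proof -
  have A: "(if 0 < j then Sd n (j-1) a k else 0) = (\<Sum>d\<le>k. (if d+1 = j then 1 else 0) * Sd n d a k)"
  proof (cases "0 < j")
    case True
    have "Sd n (j-1) a k = (\<Sum>d\<le>k. (if d = j-1 then 1 else 0) * Sd n d a k)"
      by (rule Sd_as_sum[of n a, OF assms])
    also have "\<dots> = (\<Sum>d\<le>k. (if d+1 = j then 1 else 0) * Sd n d a k)"
      by (rule sum.cong) (use True in auto)
    finally show ?thesis using True by simp
  next
    case False then show ?thesis by simp
  qed
  have B: "Sd n j a k = (\<Sum>d\<le>k. (if d = j then 1 else 0) * Sd n d a k)"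
    by (rule Sd_as_sum[of n a, OF assms])
  show ?thesis unfolding Tj_def A B by (simp add: sum_subtractf left_diff_distrib)
qed

lemma cmod_om [simp]: "cmod (om M i) = 1"
  by (simp add: om_def)

lemma csum_M:
  assumes "0 < M" "j < M"
  shows "(\<Sum>i<M. cnj (om M i)^j / of_nat M) = (if j = 0 then 1 else 0)"
proof -
  have "(\<Sum>i<M. cnj (om M i)^j / of_nat M) = (\<Sum>i<M. cnj (om M i)^j * om M i^0) / of_nat M"
    by (simp add: sum_divide_distrib)
  also have "\<dots> = (if j = 0 then 1 else 0)"
    using roots_sum[OF assms(1) assms(1) assms(2)] assms(1) by auto
  finally show ?thesis .
qed

lemma AV_repr:
  assumes "2 \<le> n" "a 0 = 0" "0 < M" "j < M"
  shows "Tj n \<mu> a j k - (\<Sum>i<M. cnj (om M i)^j / of_nat M * G n \<mu> (lamf i) a k)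
    = (\<Sum>d\<le>k. (((if d+1 = j then 1 else 0) - (if d = j then 1 else 0))
         - (\<Sum>i<M. cnj (om M i)^j / of_nat M * (lamf i^(d+1) - lamf i^d))) * Sd n d a k)"
proof -
  let ?c = "\<lambda>i. cnj (om M i)^j / of_nat M"
  have "(\<Sum>i<M. ?c i * G n \<mu> (lamf i) a k)
      = (\<Sum>i<M. ?c i * (\<mu> * e0 k)) + (\<Sum>i<M. \<Sum>d\<le>k. ?c i * ((lamf i^(d+1) - lamf i^d) * Sd n d a k))"
    by (simp add: G_expand distrib_left sum.distrib sum_distrib_left)
  also have "(\<Sum>i<M. ?c i * (\<mu> * e0 k)) = (\<Sum>i<M. ?c i) * (\<mu> * e0 k)"
    by (simp add: sum_distrib_right)
  also have "\<dots> = (if j = 0 then \<mu> * e0 k else 0)"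
    using csum_M[OF assms(3,4)] by simp
  also have "(\<Sum>i<M. \<Sum>d\<le>k. ?c i * ((lamf i^(d+1) - lamf i^d) * Sd n d a k))
      = (\<Sum>d\<le>k. (\<Sum>i<M. ?c i * (lamf i^(d+1) - lamf i^d)) * Sd n d a k)"
    by (subst sum.swap) (simp add: sum_distrib_right mult.assoc)
  finally have "(\<Sum>i<M. ?c i * G n \<mu> (lamf i) a k) = (if j = 0 then \<mu> * e0 k else 0)
      + (\<Sum>d\<le>k. (\<Sum>i<M. ?c i * (lamf i^(d+1) - lamf i^d)) * Sd n d a k)" .
  then show ?thesis
    unfolding Tj_expand[of n a, OF assms(1,2)] by (simp add: sum_subtractf left_diff_distrib)
qed

lemma gamma_bound3:
  assumes "\<And>i. i < M \<Longrightarrow> cmod (lamf i) = 1" "0 < M"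
  shows "cmod (((if d+1 = j then 1 else 0) - (if d = j then 1 else 0))
         - (\<Sum>i<M. cnj (om M i)^j / of_nat M * (lamf i^(d+1) - lamf i^d))) \<le> 3"
proof -
  have t: "cmod (cnj (om M i)^j / of_nat M * (lamf i^(d+1) - lamf i^d)) \<le> 2 / real M" if "i < M" for i
  proof -
    have "cmod (lamf i^(d+1) - lamf i^d) \<le> cmod (lamf i^(d+1)) + cmod (lamf i^d)" by (rule norm_triangle_ineq4)
    also have "\<dots> = 2" using assms(1)[OF that] by (simp add: norm_power norm_mult)
    finally have "cmod (lamf i^(d+1) - lamf i^d) \<le> 2" .
    then show ?thesis by (simp add: norm_mult norm_divide norm_power divide_right_mono)
  qed
  have "cmod (\<Sum>i<M. cnj (om M i)^j / of_nat M * (lamf i^(d+1) - lamf i^d)) \<le> (\<Sum>i<M. 2 / real M)"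
    by (rule order_trans[OF norm_sum sum_mono]) (rule t, simp)
  also have "\<dots> = 2" using assms(2) by simp
  finally have s: "cmod (\<Sum>i<M. cnj (om M i)^j / of_nat M * (lamf i^(d+1) - lamf i^d)) \<le> 2" .
  have o: "cmod ((if d+1 = j then 1 else 0) - (if d = j then 1 else (0::complex))) \<le> 1" by auto
  show ?thesis
    using norm_triangle_ineq4[of "(if d+1 = j then 1 else 0) - (if d = j then 1 else (0::complex))"
        "\<Sum>i<M. cnj (om M i)^j / of_nat M * (lamf i^(d+1) - lamf i^d)"] o s by linarith
qed

lemma gamma_boundd:
  assumes "\<And>i. i < M \<Longrightarrow> cmod (lamf i) = 1" "\<And>i. i < M \<Longrightarrow> cmod (lamf i - om M i) \<le> \<delta>"
    "0 < M" "j < M" "d + 1 < M"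
  shows "cmod (((if d+1 = j then 1 else 0) - (if d = j then 1 else 0))
         - (\<Sum>i<M. cnj (om M i)^j / of_nat M * (lamf i^(d+1) - lamf i^d))) \<le> (2 * real d + 1) * \<delta>"
proof -
  let ?c = "\<lambda>i. cnj (om M i)^j / of_nat M"
  have r: "(\<Sum>i<M. ?c i * (om M i^(d+1) - om M i^d)) = (if d+1 = j then 1 else 0) - (if d = j then 1 else 0)"
  proof -
    have "(\<Sum>i<M. ?c i * (om M i^(d+1) - om M i^d))
        = ((\<Sum>i<M. cnj (om M i)^j * om M i^(d+1)) - (\<Sum>i<M. cnj (om M i)^j * om M i^d)) / of_nat M"
      by (simp add: sum_divide_distrib sum_subtractf right_diff_distrib diff_divide_distrib)
    also have "\<dots> = (if d+1 = j then 1 else 0) - (if d = j then 1 else 0)"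
      using roots_sum[of M "d+1" j] roots_sum[of M d j] assms(3,4,5) by (auto simp: diff_divide_distrib)
    finally show ?thesis .
  qed
  have t: "cmod (?c i * ((om M i^(d+1) - lamf i^(d+1)) - (om M i^d - lamf i^d))) \<le> (2 * real d + 1) * \<delta> / real M"
    if "i < M" for i
  proof -
    have "cmod (om M i^(d+1) - lamf i^(d+1)) \<le> real (d+1) * cmod (om M i - lamf i)"
      by (rule norm_power_diff) (use assms(1)[OF that] in auto)
    moreover have "cmod (om M i^d - lamf i^d) \<le> real d * cmod (om M i - lamf i)"
      by (rule norm_power_diff) (use assms(1)[OF that] in auto)
    moreover have "cmod (om M i - lamf i) \<le> \<delta>" using assms(2)[OF that] by (simp add: norm_minus_commute)
    ultimately have "cmod (om M i^(d+1) - lamf i^(d+1)) + cmod (om M i^d - lamf i^d)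
        \<le> (2 * real d + 1) * cmod (om M i - lamf i)"
      by (simp add: algebra_simps)
    also have "\<dots> \<le> (2 * real d + 1) * \<delta>"
      by (rule mult_left_mono) (use \<open>cmod (om M i - lamf i) \<le> \<delta>\<close> in auto)
    finally have "cmod ((om M i^(d+1) - lamf i^(d+1)) - (om M i^d - lamf i^d)) \<le> (2 * real d + 1) * \<delta>"
      using norm_triangle_ineq4[of "om M i^(d+1) - lamf i^(d+1)" "om M i^d - lamf i^d"] by linarith
    then show ?thesis by (simp add: norm_mult norm_divide norm_power divide_right_mono)
  qed
  have "((if d+1 = j then 1 else 0) - (if d = j then 1 else 0))
         - (\<Sum>i<M. ?c i * (lamf i^(d+1) - lamf i^d))
       = (\<Sum>i<M. ?c i * ((om M i^(d+1) - lamf i^(d+1)) - (om M i^d - lamf i^d)))"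
    unfolding r[symmetric] by (simp add: sum_subtractf[symmetric] algebra_simps)
  also have "cmod \<dots> \<le> (\<Sum>i<M. (2 * real d + 1) * \<delta> / real M)"
    by (rule order_trans[OF norm_sum sum_mono]) (rule t, simp)
  also have "\<dots> = (2 * real d + 1) * \<delta>" using assms(3) by simp
  finally show ?thesis .
qed

lemma K_bound:
  fixes \<gamma> :: "nat \<Rightarrow> complex"
  assumes "2 \<le> n" "\<And>d. cmod (\<gamma> d) \<le> 3" "\<And>d. d < D \<Longrightarrow> cmod (\<gamma> d) \<le> \<eta>"
  shows "(\<Sum>d<N. (cmod (\<gamma> d))\<^sup>2 / real n ^ d) \<le> real D * \<eta>\<^sup>2 + 18 * (1/2)^D"
proof -
  define f where "f d = (if d < D then \<eta>\<^sup>2 else 9 * (1/2::real)^d)" for d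
  have tb: "(cmod (\<gamma> d))\<^sup>2 / real n ^ d \<le> f d" for d
  proof -
    have np: "1 \<le> real n ^ d" using assms(1) by (simp add: one_le_power)
    have "(cmod (\<gamma> d))\<^sup>2 / real n ^ d \<le> (cmod (\<gamma> d))\<^sup>2"
      using divide_left_mono[of 1 "real n ^ d" "(cmod (\<gamma> d))\<^sup>2"] np assms(1) by simp
    show ?thesis
    proof (cases "d < D")
      case True
      have "(cmod (\<gamma> d))\<^sup>2 \<le> \<eta>\<^sup>2" using assms(3)[OF True] by (simp add: power_mono)
      then show ?thesis using \<open>(cmod (\<gamma> d))\<^sup>2 / real n ^ d \<le> (cmod (\<gamma> d))\<^sup>2\<close> True by (simp add: f_def)
    next
      case False
      have "(cmod (\<gamma> d))\<^sup>2 \<le> 9" using assms(2)[of d] power_mono[of "cmod (\<gamma> d)" 3 2] by simp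
      then have "(cmod (\<gamma> d))\<^sup>2 / real n ^ d \<le> 9 / real n ^ d"
        by (rule divide_right_mono) simp
      also have "\<dots> = 9 * (1 / real n ^ d)" by simp
      also have "\<dots> \<le> 9 * (1/2)^d" by (rule mult_left_mono[OF geo_le[OF assms(1)]]) simp
      finally show ?thesis using False by (simp add: f_def)
    qed
  qed
  have f0: "0 \<le> f d" for d by (simp add: f_def)
  have "(\<Sum>d<N. (cmod (\<gamma> d))\<^sup>2 / real n ^ d) \<le> (\<Sum>d<N. f d)" by (rule sum_mono) (rule tb)
  also have "\<dots> \<le> (\<Sum>d<max N D. f d)" by (rule sum_mono2) (auto simp: f0)
  also have "\<dots> = (\<Sum>d\<in>{0..<D}. f d) + (\<Sum>d\<in>{D..<max N D}. f d)"
    by (subst sum.atLeastLessThan_concat) (auto simp: atLeast0LessThan)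
  also have "(\<Sum>d\<in>{0..<D}. f d) = real D * \<eta>\<^sup>2" by (simp add: f_def)
  also have "(\<Sum>d\<in>{D..<max N D}. f d) = 9 * (\<Sum>d\<in>{D..<max N D}. (1/2::real)^d)"
    by (simp add: f_def sum_distrib_left)
  also have "\<dots> \<le> 9 * (2 * (1/2)^D)" by (rule mult_left_mono[OF geo_tail]) simp
  finally show ?thesis by simp
qed


lemma Tj_H2:
  assumes "2 \<le> n" "good n a"
  shows "Tj n \<mu> a j \<in> H2"
proof (cases "j = 0")
  case True
  have "(\<lambda>k. \<mu> * e0 k - Sd n 0 a k) \<in> H2"
    by (rule h2_diff(1)[OF h2_scale(1)[OF e0_H2] Sd_H2[OF assms(2,1)]])
  then show ?thesis using True by (simp add: Tj_def[abs_def])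
next
  case False
  have "(\<lambda>k. Sd n (j-1) a k - Sd n j a k) \<in> H2"
    by (rule h2_diff(1)[OF Sd_H2[OF assms(2,1)] Sd_H2[OF assms(2,1)]])
  then show ?thesis using False by (simp add: Tj_def[abs_def])
qed

lemma cancel_aux:
  fixes p q B \<epsilon> :: real
  assumes "p \<noteq> 0" "q \<noteq> 0" "B \<noteq> 0"
  shows "p * (\<epsilon> / (2 * B * p * q)) * B * (2 * q) = \<epsilon>"
  using assms by (simp add: field_simps)

lemma final_arith:
  fixes \<epsilon> B \<delta> \<eta> h :: real and D :: nat
  assumes e: "0 < \<epsilon>" and B: "B = h + 1" "0 \<le> h"
    and D: "(1/2::real)^D < \<epsilon>\<^sup>2 / (72 * B\<^sup>2)"
    and d: "\<delta> = \<epsilon> / (2 * B * (2 * real D + 1) * (real D + 1))"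
    and eta: "\<eta> = (2 * real D + 1) * \<delta>"
  shows "sqrt (real D * \<eta>\<^sup>2 + 18 * (1/2)^D) * h < \<epsilon>"
proof -
  have Bp: "0 < B" using B by simp
  have p1: "0 < 2 * real D + 1" "0 < real D + 1" by auto
  have ne: "2 * real D + 1 \<noteq> 0" "real D + 1 \<noteq> 0" "B \<noteq> 0" using Bp by auto
  have etaB0: "\<eta> * B * (2 * (real D + 1)) = \<epsilon>"
    unfolding eta d by (rule cancel_aux[OF ne])
  have etaB: "\<eta> * B = \<epsilon> / (2 * (real D + 1))"
    using etaB0 ne by (simp add: eq_divide_eq)
  have Dle: "real D \<le> (real D + 1)\<^sup>2" by (simp add: power2_eq_square algebra_simps)
  have t1: "real D * \<eta>\<^sup>2 * B\<^sup>2 \<le> \<epsilon>\<^sup>2 / 4"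
  proof -
    have "real D * \<eta>\<^sup>2 * B\<^sup>2 = real D * (\<eta> * B)\<^sup>2" by (simp add: power_mult_distrib)
    also have "\<dots> = real D * \<epsilon>\<^sup>2 / (4 * (real D + 1)\<^sup>2)"
      unfolding etaB by (simp add: power_divide power_mult_distrib power2_eq_square algebra_simps)
    also have "\<dots> \<le> (real D + 1)\<^sup>2 * \<epsilon>\<^sup>2 / (4 * (real D + 1)\<^sup>2)"
      by (rule divide_right_mono[OF mult_right_mono[OF Dle]]) auto
    also have "\<dots> = \<epsilon>\<^sup>2 / 4" by simp
    finally show ?thesis .
  qed
  have t2: "18 * (1/2::real)^D * B\<^sup>2 < \<epsilon>\<^sup>2 / 4"
  proof -
    have "18 * (1/2::real)^D * B\<^sup>2 < 18 * (\<epsilon>\<^sup>2 / (72 * B\<^sup>2)) * B\<^sup>2"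
      using D Bp by (intro mult_strict_right_mono mult_strict_left_mono) auto
    also have "\<dots> = \<epsilon>\<^sup>2 / 4" using Bp by simp
    finally show ?thesis .
  qed
  let ?K = "real D * \<eta>\<^sup>2 + 18 * (1/2::real)^D"
  have K0: "0 \<le> ?K" by simp
  have "?K * B\<^sup>2 = real D * \<eta>\<^sup>2 * B\<^sup>2 + 18 * (1/2::real)^D * B\<^sup>2" by (simp add: distrib_right)
  moreover have "0 < \<epsilon>\<^sup>2" using e by simp
  ultimately have "?K * B\<^sup>2 < \<epsilon>\<^sup>2" using t1 t2 by linarith
  then have "sqrt (?K * B\<^sup>2) < sqrt (\<epsilon>\<^sup>2)" by (rule real_sqrt_less_mono)
  then have "sqrt ?K * B < \<epsilon>" using e Bp by (simp add: real_sqrt_mult)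
  moreover have "sqrt ?K * h \<le> sqrt ?K * B" using B by (intro mult_left_mono) auto
  ultimately show ?thesis by linarith
qed


lemma AV:
  assumes n: "2 \<le> n" and s: "seed n a \<mu>"
    and A1: "circle_measurable A" and A2: "circle_measure A = 1"
  shows "Ap n A (Tj n \<mu> a j)"
  unfolding Ap_def
proof (intro conjI allI impI)
  have g: "good n a" using s by (simp add: seed_def)
  have a0: "a 0 = 0" by (rule good_0[OF g])
  have aH: "a \<in> H2" by (rule good_H2[OF g])
  show "Tj n \<mu> a j \<in> H2" by (rule Tj_H2[OF n g])
  fix \<epsilon> :: real assume e: "0 < \<epsilon>"
  define h where "h = h2_norm a"
  have h0: "0 \<le> h" unfolding h_def by (rule h2_norm_nonneg[OF aH])
  define B where "B = h + 1"
  have Bp: "0 < B" using h0 by (simp add: B_def)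
  have "0 < \<epsilon>\<^sup>2 / (72 * B\<^sup>2)" using e Bp by simp
  then obtain D0 where D0: "(1/2::real)^D0 < \<epsilon>\<^sup>2 / (72 * B\<^sup>2)"
    using real_arch_pow_inv[of "\<epsilon>\<^sup>2 / (72 * B\<^sup>2)" "1/2"] by auto
  define D where "D = D0 + j"
  have DD: "(1/2::real)^D < \<epsilon>\<^sup>2 / (72 * B\<^sup>2)"
  proof -
    have "(1/2::real)^D \<le> (1/2)^D0" by (rule power_decreasing) (auto simp: D_def)
    then show ?thesis using D0 by linarith
  qed
  define M where "M = D + j + 2"
  have M0: "0 < M" and jM: "j < M" by (auto simp: M_def)
  define \<delta> where "\<delta> = \<epsilon> / (2 * B * (2 * real D + 1) * (real D + 1))"
  have dp: "0 < \<delta>" unfolding \<delta>_def using e Bp by (intro divide_pos_pos) auto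
  define \<eta> where "\<eta> = (2 * real D + 1) * \<delta>"
  have "\<forall>i. \<exists>lam. i < M \<longrightarrow> lam \<in> A \<and> cmod lam = 1 \<and> cmod (lam - om M i) < \<delta>"
  proof
    fix i
    show "\<exists>lam. i < M \<longrightarrow> lam \<in> A \<and> cmod lam = 1 \<and> cmod (lam - om M i) < \<delta>"
    proof (cases "i < M")
      case True
      have "0 \<le> real i / real M" "real i / real M < 1" using True by auto
      from A_near[OF A1 A2 this dp] obtain lam where
        "lam \<in> A" "cmod lam = 1" "cmod (lam - cis (2 * pi * (real i / real M))) < \<delta>" by blast
      then show ?thesis by (intro exI[of _ lam]) (simp add: om_def)
    qed simp
  qed
  then obtain lamf where lf: "\<And>i. i < M \<Longrightarrow> lamf i \<in> A \<and> cmod (lamf i) = 1 \<and> cmod (lamf i - om M i) < \<delta>"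
    by metis
  define c where "c i = cnj (om M i)^j / of_nat M" for i
  define y where "y = (\<lambda>k. \<Sum>i<M. c i * G n \<mu> (lamf i) a k)"
  have yS: "y \<in> Sp n A"
    unfolding y_def by (rule Sp_sum[where l=lamf]) (use lf G_eig[OF s n] in auto)
  define \<gamma> where "\<gamma> d = ((if d+1 = j then 1 else 0) - (if d = j then 1 else 0))
         - (\<Sum>i<M. cnj (om M i)^j / of_nat M * (lamf i^(d+1) - lamf i^d))" for d
  have err: "(\<lambda>k. Tj n \<mu> a j k - y k) = (\<lambda>k. \<Sum>d\<le>k. \<gamma> d * Sd n d a k)"
    unfolding y_def c_def \<gamma>_def using AV_repr[of n a M j \<mu> _ lamf, OF n a0 M0 jM] by simp
  have g3: "cmod (\<gamma> d) \<le> 3" for d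
    unfolding \<gamma>_def by (rule gamma_bound3) (use lf M0 in auto)
  have gD: "cmod (\<gamma> d) \<le> \<eta>" if "d < D" for d
  proof -
    have "cmod (\<gamma> d) \<le> (2 * real d + 1) * \<delta>"
      unfolding \<gamma>_def by (rule gamma_boundd) (use lf M0 jM that in \<open>auto simp: M_def less_imp_le\<close>)
    also have "\<dots> \<le> \<eta>" unfolding \<eta>_def using that dp by (intro mult_right_mono) auto
    finally show ?thesis .
  qed
  have Kb: "(\<Sum>d<N. (cmod (\<gamma> d))\<^sup>2 / real n ^ d) \<le> real D * \<eta>\<^sup>2 + 18 * (1/2)^D" for N
    by (rule K_bound[OF n g3 gD])
  have "h2_norm (\<lambda>k. \<Sum>d\<le>k. \<gamma> d * Sd n d a k) \<le> sqrt (real D * \<eta>\<^sup>2 + 18 * (1/2)^D) * h2_norm a"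
    by (rule LN(2)[OF g n Kb]) simp
  also have "\<dots> < \<epsilon>"
    using final_arith[OF e B_def h0 DD \<delta>_def \<eta>_def] by (simp add: h_def)
  finally show "\<exists>y\<in>Sp n A. h2_norm (\<lambda>k. Tj n \<mu> a j k - y k) < \<epsilon>"
    using yS err by (intro bexI[of _ y]) auto
qed


lemma Sd_norm_small:
  assumes "a \<in> H2" "2 \<le> n" "0 < \<epsilon>"
  shows "\<exists>J. h2_norm (Sd n J a) < \<epsilon>"
proof -
  define h where "h = h2_norm a"
  have h0: "0 \<le> h" unfolding h_def by (rule h2_norm_nonneg[OF assms(1)])
  have "0 < \<epsilon>\<^sup>2 / (h\<^sup>2 + 1)" using assms(3) by (simp add: add_nonneg_pos)
  then obtain J where J: "(1/2::real)^J < \<epsilon>\<^sup>2 / (h\<^sup>2 + 1)"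
    using real_arch_pow_inv[of "\<epsilon>\<^sup>2 / (h\<^sup>2 + 1)" "1/2"] by auto
  have b: "(\<Sum>k<N. (cmod (Sd n J a k))\<^sup>2) \<le> (sqrt (h\<^sup>2 / real n ^ J))\<^sup>2" for N
    using Sd_sum_bound[OF assms(1), where N=N and d=J] assms(2) by (simp add: h_def)
  have "h2_norm (Sd n J a) \<le> sqrt (h\<^sup>2 / real n ^ J)"
    by (rule h2_bound(2)[OF b]) simp
  also have "\<dots> < \<epsilon>"
  proof -
    have "h\<^sup>2 / real n ^ J = h\<^sup>2 * (1 / real n ^ J)" by simp
    also have "\<dots> \<le> h\<^sup>2 * (1/2)^J" by (rule mult_left_mono[OF geo_le[OF assms(2)]]) simp
    also have "\<dots> \<le> (h\<^sup>2 + 1) * (1/2)^J" by (rule mult_right_mono) auto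
    also have "\<dots> < (h\<^sup>2 + 1) * (\<epsilon>\<^sup>2 / (h\<^sup>2 + 1))"
      by (rule mult_strict_left_mono[OF J]) (simp add: add_nonneg_pos)
    also have "\<dots> = \<epsilon>\<^sup>2"
    proof -
      have "h\<^sup>2 + 1 \<noteq> 0" using zero_le_power2[of h] by linarith
      then show ?thesis by simp
    qed
    finally have "h\<^sup>2 / real n ^ J < \<epsilon>\<^sup>2" .
    then have "sqrt (h\<^sup>2 / real n ^ J) < sqrt (\<epsilon>\<^sup>2)" by (rule real_sqrt_less_mono)
    then show ?thesis using assms(3) by simp
  qed
  finally show ?thesis by blast
qed

lemma telescope:
  "(\<Sum>j<Suc J. Tj n \<mu> a j k) = \<mu> * e0 k - Sd n J a k"
  by (induction J) (auto simp: Tj_def)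

lemma seed_consequences:
  assumes n: "2 \<le> n" and s: "seed n a \<mu>"
    and A1: "circle_measurable A" and A2: "circle_measure A = 1"
  shows "Ap n A (\<lambda>k. \<mu> * e0 k)" "Ap n A (Sd n J a)"
proof -
  have g: "good n a" using s by (simp add: seed_def)
  have aH: "a \<in> H2" by (rule good_H2[OF g])
  have T: "Ap n A (\<lambda>k. \<mu> * e0 k - Sd n J a k)" for J
  proof -
    have "Ap n A (\<lambda>k. \<Sum>j<Suc J. Tj n \<mu> a j k)"
      by (rule Ap_sum) (rule AV[OF n s A1 A2])
    then show ?thesis by (rule Ap_cong) (rule telescope)
  qed
  show E: "Ap n A (\<lambda>k. \<mu> * e0 k)"
  proof (rule Ap_lim)
    show "(\<lambda>k. \<mu> * e0 k) \<in> H2" by (rule h2_scale(1)[OF e0_H2])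
    fix \<epsilon> :: real assume "0 < \<epsilon>"
    then obtain J where "h2_norm (Sd n J a) < \<epsilon>" using Sd_norm_small[OF aH n] by blast
    then show "\<exists>z. Ap n A z \<and> h2_norm (\<lambda>k. \<mu> * e0 k - z k) < \<epsilon>"
      using T[of J] by (intro exI[of _ "\<lambda>k. \<mu> * e0 k - Sd n J a k"]) (simp add: fun_eq_iff)
  qed
  show "Ap n A (Sd n J a)"
    using Ap_diff[OF E T[of J]] by (rule Ap_cong) simp
qed


definition ee :: "nat \<Rightarrow> nat \<Rightarrow> complex" where "ee p k = (if k = p then 1 else 0)"
definition wv :: "nat \<Rightarrow> nat \<Rightarrow> complex" where
  "wv n k = (if 1 \<le> k \<and> k < n then 1 / of_nat (n - 1) else 0)"

lemma Wa_diff: "Wa n (\<lambda>k. x k - y k) j = Wa n x j - Wa n y j"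
  by (simp add: Wa_def sum_subtractf)

lemma Sd_add: "Sd n J (\<lambda>k. x k + y k) k = Sd n J x k + Sd n J y k"
  by (simp add: Sd_def add_divide_distrib)

lemma Sd_Sd1: "Sd n J (Sd n 1 b) k = Sd n (Suc J) b k"
proof -
  have "k div n^J div n = k div n div n^J" by (metis div_mult2_eq mult.commute)
  then show ?thesis by (simp add: Sd_def div_mult2_eq mult.commute)
qed

lemma Wa_ee:
  assumes "0 < n"
  shows "Wa n (ee k) j = (if j = k div n then 1 else 0)"
proof -
  have "Wa n (ee k) j = (\<Sum>r<n. if r = k mod n \<and> j = k div n then 1 else 0)"
    unfolding Wa_def ee_def
  proof (rule sum.cong[OF refl])
    fix r assume "r \<in> {..<n}"
    then have r: "r < n" by simp
    have "(n*j + r = k) = (r = k mod n \<and> j = k div n)"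
    proof
      assume "n*j + r = k"
      then show "r = k mod n \<and> j = k div n" using r by auto
    next
      assume "r = k mod n \<and> j = k div n"
      then show "n*j + r = k" by (metis div_mult_mod_eq mult.commute)
    qed
    then show "(if n * j + r = k then 1 else 0) = (if r = k mod n \<and> j = k div n then 1 else (0::complex))"
      by simp
  qed
  also have "\<dots> = (if j = k div n then 1 else 0)"
    using assms by (cases "j = k div n") (auto simp: sum.delta)
  finally show ?thesis .
qed

lemma Wa_Sd1ee:
  assumes "0 < n"
  shows "Wa n (Sd n 1 (ee p)) j = (if j = p then 1 else 0)"
proof -
  have "Wa n (Sd n 1 (ee p)) j = (\<Sum>r<n. (if j = p then 1 else 0) / of_nat n)"
    unfolding Wa_def Sd_def ee_def by (rule sum.cong[OF refl]) (use assms in auto)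
  also have "\<dots> = (if j = p then 1 else 0)" using assms by simp
  finally show ?thesis .
qed

lemma seed_w:
  assumes "2 \<le> n"
  shows "seed n (wv n) 1"
  unfolding seed_def
proof (intro conjI allI)
  show "good n (wv n)" unfolding good_def
    by (rule exI[of _ 1], rule exI[of _ n]) (auto simp: wv_def)
  fix j
  show "Wa n (wv n) j = (if j = 0 then 1 else 0)"
  proof (cases "j = 0")
    case True
    obtain m where m: "n = Suc m" "1 \<le> m" using assms by (cases n) auto
    have "Wa n (wv n) j = (\<Sum>r<Suc m. wv n r)" using True m by (simp add: Wa_def)
    also have "\<dots> = wv n 0 + (\<Sum>r<m. wv n (Suc r))" by (rule sum.lessThan_Suc_shift)
    also have "\<dots> = (\<Sum>r<m. 1 / of_nat m)" using m by (simp add: wv_def)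
    also have "\<dots> = 1" using m by simp
    finally show ?thesis using True by simp
  next
    case False
    have "wv n (n*j + r) = 0" for r
    proof -
      have "n \<le> n * j" using False by simp
      then have "\<not> (n*j + r < n)" by linarith
      then show ?thesis by (simp add: wv_def)
    qed
    then show ?thesis using False by (simp add: Wa_def)
  qed
qed

lemma seed_ew:
  assumes "2 \<le> n" "1 \<le> p" "p < n"
  shows "seed n (\<lambda>k. ee p k - wv n k) 0"
  unfolding seed_def
proof (intro conjI allI)
  show "good n (\<lambda>k. ee p k - wv n k)" unfolding good_def
    by (rule exI[of _ 1], rule exI[of _ n]) (use assms in \<open>auto simp: wv_def ee_def\<close>)
  fix j
  have "Wa n (\<lambda>k. ee p k - wv n k) j = Wa n (ee p) j - Wa n (wv n) j" by (rule Wa_diff)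
  also have "\<dots> = 0"
    using Wa_ee[of n p j] seed_w[OF assms(1)] assms by (auto simp: seed_def)
  finally show "Wa n (\<lambda>k. ee p k - wv n k) j = (if j = 0 then 0 else 0)" by simp
qed

lemma seed_eS:
  assumes "2 \<le> n" "n \<le> k"
  shows "seed n (\<lambda>k'. ee k k' - Sd n 1 (ee (k div n)) k') 0"
  unfolding seed_def
proof (intro conjI allI)
  define p where "p = k div n"
  have "n div n \<le> k div n" by (rule div_le_mono[OF assms(2)])
  then have p1: "1 \<le> p" using assms(1) by (simp add: p_def)
  have sup: "n * p \<le> k' \<and> k' < n * p + n" if "k' div n = p" for k'
  proof -
    have "k' div n * n + k' mod n = k'" by (rule div_mult_mod_eq)
    moreover have "k' mod n < n" using assms(1) by simp
    moreover have "k' div n * n = n * p" using that by simp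
    ultimately show ?thesis by linarith
  qed
  show "good n (\<lambda>k'. ee k k' - Sd n 1 (ee (k div n)) k')" unfolding good_def
  proof (rule exI[of _ "n*p"], rule exI[of _ "n*p + n"], intro conjI allI impI)
    show "1 \<le> n * p" using p1 assms(1) by simp
    have "n * p + n \<le> n * p + n * p" using p1 by simp
    also have "\<dots> \<le> n * (n * p)" using assms(1) by (simp add: mult_2[symmetric] mult.assoc[symmetric])
    finally show "n * p + n \<le> n * (n * p)" .
    fix k' assume k': "k' < n * p \<or> n * p + n \<le> k'"
    have "k' div n \<noteq> p" using sup[of k'] k' by linarith
    moreover have "k' \<noteq> k"
    proof
      assume "k' = k"
      then show False using sup[of k] k' unfolding p_def by linarith
    qed
    ultimately show "ee k k' - Sd n 1 (ee (k div n)) k' = 0"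
      by (simp add: ee_def Sd_def p_def)
  qed
  fix j
  have "Wa n (\<lambda>k'. ee k k' - Sd n 1 (ee (k div n)) k') j = Wa n (ee k) j - Wa n (Sd n 1 (ee (k div n))) j"
    by (rule Wa_diff)
  also have "\<dots> = 0" using Wa_ee[of n k j] Wa_Sd1ee[of n "k div n" j] assms(1) by simp
  finally show "Wa n (\<lambda>k'. ee k k' - Sd n 1 (ee (k div n)) k') j = (if j = 0 then 0 else 0)" by simp
qed


lemma ee_Sd_Ap:
  assumes n: "2 \<le> n" and A1: "circle_measurable A" and A2: "circle_measure A = 1"
  shows "1 \<le> k \<Longrightarrow> Ap n A (Sd n J (ee k))"
proof (induction k arbitrary: J rule: less_induct)
  case (less k)
  show ?case
  proof (cases "k < n")
    case True
    have a: "Ap n A (Sd n J (\<lambda>k'. ee k k' - wv n k'))"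
      by (rule seed_consequences(2)[OF n seed_ew[OF n less.prems True] A1 A2])
    have b: "Ap n A (Sd n J (wv n))" by (rule seed_consequences(2)[OF n seed_w[OF n] A1 A2])
    show ?thesis using Ap_add[OF a b] by (rule Ap_cong) (simp add: Sd_def add_divide_distrib[symmetric])
  next
    case False
    define p where "p = k div n"
    have "n div n \<le> k div n" by (rule div_le_mono) (use False in simp)
    then have p1: "1 \<le> p" using n by (simp add: p_def)
    have pk: "p < k" unfolding p_def using n less.prems by simp
    have a: "Ap n A (Sd n J (\<lambda>k'. ee k k' - Sd n 1 (ee (k div n)) k'))"
      by (rule seed_consequences(2)[OF n seed_eS[OF n] A1 A2]) (use False in simp)
    have b: "Ap n A (Sd n (Suc J) (ee p))" by (rule less.IH[OF pk p1])
    show ?thesis using Ap_add[OF a b]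
    proof (rule Ap_cong)
      fix k'
      show "Sd n J (\<lambda>k'. ee k k' - Sd n 1 (ee (k div n)) k') k' + Sd n (Suc J) (ee p) k' = Sd n J (ee k) k'"
        unfolding Sd_Sd1[symmetric] p_def by (simp add: Sd_def diff_divide_distrib)
    qed
  qed
qed

lemma ee_Ap:
  assumes n: "2 \<le> n" and A1: "circle_measurable A" and A2: "circle_measure A = 1"
  shows "Ap n A (ee k)"
proof (cases "k = 0")
  case True
  have "Ap n A (\<lambda>k. 1 * e0 k)" by (rule seed_consequences(1)[OF n seed_w[OF n] A1 A2])
  then show ?thesis by (rule Ap_cong) (simp add: True ee_def e0_def)
next
  case False
  have "Ap n A (Sd n 0 (ee k))" by (rule ee_Sd_Ap[OF assms]) (use False in simp)
  then show ?thesis by (rule Ap_cong) simp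
qed

lemma tail_sum:
  fixes g :: "nat \<Rightarrow> real"
  assumes "summable g" "\<And>k. 0 \<le> g k"
  shows "(\<Sum>k<M. if k < N then 0 else g k) \<le> (\<Sum>i. g (i + N))"
proof -
  let ?h = "\<lambda>k. if k < N then 0 else g k"
  have "(\<Sum>k<M. ?h k) \<le> (\<Sum>k<M+N. ?h k)" by (rule sum_mono2) (auto simp: assms(2))
  also have "\<dots> = (\<Sum>k\<in>{0..<N}. ?h k) + (\<Sum>k\<in>{N..<M+N}. ?h k)"
    by (subst sum.atLeastLessThan_concat) (auto simp: atLeast0LessThan)
  also have "(\<Sum>k\<in>{0..<N}. ?h k) = 0" by simp
  also have "(\<Sum>k\<in>{N..<M+N}. ?h k) = (\<Sum>k\<in>{0+N..<M+N}. ?h k)" by simp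
  also have "\<dots> = (\<Sum>i\<in>{0..<M}. ?h (i + N))" by (rule sum.shift_bounds_nat_ivl)
  also have "\<dots> = (\<Sum>i<M. g (i + N))" by (simp add: atLeast0LessThan)
  also have "\<dots> \<le> (\<Sum>i. g (i + N))"
    by (rule sum_le_suminf) (use assms in auto)
  finally show ?thesis by simp
qed

lemma all_Ap:
  assumes n: "2 \<le> n" and A1: "circle_measurable A" and A2: "circle_measure A = 1" and f: "f \<in> H2"
  shows "Ap n A f"
proof (rule Ap_lim[OF f])
  fix \<epsilon> :: real assume e: "0 < \<epsilon>"
  let ?g = "\<lambda>k. (cmod (f k))\<^sup>2"
  have sg: "summable ?g" using f by (simp add: H2_def)
  obtain N where N: "\<And>m. m \<ge> N \<Longrightarrow> norm (\<Sum>i. ?g (i + m)) < \<epsilon>\<^sup>2 / 2"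
    using suminf_exist_split[of "\<epsilon>\<^sup>2 / 2" ?g] e sg by auto
  define T where "T = (\<Sum>i. ?g (i + N))"
  have T0: "0 \<le> T" unfolding T_def
    by (rule suminf_nonneg) (use summable_iff_shift[of ?g N, THEN iffD2, OF sg] in auto)
  have TN: "T < \<epsilon>\<^sup>2 / 2" using N[of N] T0 by (simp add: T_def)
  define z where "z = (\<lambda>k. \<Sum>i<N. f i * ee i k)"
  have zA: "Ap n A z" unfolding z_def
    by (rule Ap_sum) (rule Ap_scale[OF ee_Ap[OF n A1 A2]])
  have zk: "z k = (if k < N then f k else 0)" for k
    unfolding z_def ee_def by (simp add: if_distrib sum.delta cong: if_cong)
  have b: "(\<Sum>k<M. (cmod (f k - z k))\<^sup>2) \<le> (sqrt T)\<^sup>2" for M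
  proof -
    have "(\<Sum>k<M. (cmod (f k - z k))\<^sup>2) = (\<Sum>k<M. if k < N then 0 else ?g k)"
      by (rule sum.cong) (auto simp: zk)
    also have "\<dots> \<le> T" unfolding T_def by (rule tail_sum[OF sg]) simp
    finally show ?thesis using T0 by simp
  qed
  have "h2_norm (\<lambda>k. f k - z k) \<le> sqrt T" by (rule h2_bound(2)[OF b]) (simp add: T0)
  also have "\<dots> < \<epsilon>"
  proof -
    have "0 < \<epsilon>\<^sup>2" using e by simp
    then have "T < \<epsilon>\<^sup>2" using TN by linarith
    then have "sqrt T < sqrt (\<epsilon>\<^sup>2)" by (rule real_sqrt_less_mono)
    then show ?thesis using e by simp
  qed
  finally show "\<exists>z. Ap n A z \<and> h2_norm (\<lambda>k. f k - z k) < \<epsilon>" using zA by blast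
qed

theorem mainTheorem7:
  fixes n :: nat and A :: "complex set"
  assumes "n \<ge> 2"
    and "A \<subseteq> sphere 0 1"
    and "circle_measurable A"
    and "circle_measure A = 1"
  shows "\<forall>f\<in>H2. \<forall>\<epsilon>>0. \<exists>(N::nat) (c::nat \<Rightarrow> complex) v lam.
           (\<forall>i<N. lam i \<in> A \<and> v i \<in> eigsp n (lam i)) \<and>
           h2_norm (\<lambda>k. f k - (\<Sum>i<N. c i * v i k)) < \<epsilon>"
proof (intro ballI allI impI)
  fix f :: "nat \<Rightarrow> complex" and \<epsilon> :: real
  assume f: "f \<in> H2" and e: "0 < \<epsilon>"
  have "Ap n A f" by (rule all_Ap[OF assms(1,3,4) f])
  then obtain y where y: "y \<in> Sp n A" "h2_norm (\<lambda>k. f k - y k) < \<epsilon>"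
    using e unfolding Ap_def by blast
  obtain N :: nat and c v lam where r: "\<forall>i<N. lam i \<in> A \<and> v i \<in> eigsp n (lam i)"
    "y = (\<lambda>k. \<Sum>i<N. c i * v i k)"
    using Sp_repr[OF y(1)] by blast
  show "\<exists>(N::nat) (c::nat \<Rightarrow> complex) v lam.
           (\<forall>i<N. lam i \<in> A \<and> v i \<in> eigsp n (lam i)) \<and>
           h2_norm (\<lambda>k. f k - (\<Sum>i<N. c i * v i k)) < \<epsilon>"
    using r y(2) by blast
qed

end
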